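(* Let $(\mathcal{E}_0,\varnothing,\mathcal{H}_0)\leadsto^n(\mathcal{E}_n,\mathcal{R},\mathcal{H}_n)$ be any run of recording completion for an equational system $\mathcal{E}$ (not necessarily successful). Then for all terms $s,t$ and every join $s\to^*_{\mathcal{R}}\cdot\leftarrow^*_{\mathcal{R}}t$, the recall procedure applied to this join terminates and yields a conversion $s\leftrightarrow^*_{\mathcal{E}}t$, i.e. a conversion between $s$ and $t$ all of whose steps use (in either direction) equations of $\mathcal{E}$ (indices of $\mathcal{E}_0$), apart from trivial steps $t'\stackrel{0}{\approx}t'$.
   Context: Terms are built from a signature $\mathcal{F}$ and an infinite set of variables; $>$ is a reduction order. Rules and equations carry unique natural-number indices; $\stackrel{i}{\to}$ denotes a rewrite step with the rule/equation of index $i$. A state is a triple $(\mathcal{E},\mathcal{R},\mathcal{H})$ of indexed equations, indexed rules and a history of entries $i:s\stackrel{j}{\circ_1}u\stackrel{k}{\circ_2}t$ ($\circ_1,\circ_2\in\{\leftarrow,\to,\approx\}$). In each rule below, $m$ is a fresh index larger than all previously used indices. Inference rules: (deduce) $(\mathcal{E},\mathcal{R},\mathcal{H})\leadsto(\mathcal{E}\cup\{m:s\approx t\},\mathcal{R},\mathcal{H}\cup\{m:s\stackrel{j}{\leftarrow}u\stackrel{k}{\to}t\})$ if $s\stackrel{j}{\leftarrow}_{\mathcal{R}}u\stackrel{k}{\to}_{\mathcal{R}}t$; (orient-left) $(\mathcal{E}\cup\{i:s\approx t\},\mathcal{R},\mathcal{H})\leadsto(\mathcal{E},\mathcal{R}\cup\{i:s\to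 t\},\mathcal{H})$ if $s>t$; (orient-right) $(\mathcal{E}\cup\{i:s\approx t\},\mathcal{R},\mathcal{H}\cup\{i:s\stackrel{j}{\circ_1}u\stackrel{k}{\circ_2}t\})\leadsto(\mathcal{E},\mathcal{R}\cup\{i:t\to s\},\mathcal{H}\cup\{i:t\,(\stackrel{k}{\circ_2})^{-1}\,u\,(\stackrel{j}{\circ_1})^{-1}\,s\})$ if $t>s$; (simplify-left) $(\mathcal{E}\cup\{i:s\approx t\},\mathcal{R},\mathcal{H})\leadsto(\mathcal{E}\cup\{m:u\approx t\},\mathcal{R},\mathcal{H}\cup\{m:u\stackrel{l}{\leftarrow}s\stackrel{i}{\to}t\})$ if $s\stackrel{l}{\to}_{\mathcal{R}}u$; (simplify-right) $(\mathcal{E}\cup\{i:s\approx t\},\mathcal{R},\mathcal{H})\leadsto(\mathcal{E}\cup\{m:s\approx u\},\mathcal{R},\mathcal{H}\cup\{m:s\stackrel{i}{\to}t\stackrel{l}{\to}u\})$ if $t\stackrel{l}{\to}_{\mathcal{R}}u$; (delete) $(\mathcal{E}\cup\{i:s\approx s\},\mathcal{R},\mathcal{H}\cup\{i:s\circ_1v\circ_2s\})\leadsto(\mathcal{E},\mathcal{R},\mathcal{H})$; (compose) $(\mathcal{E},\mathcal{R}\cup\{i:s\to t\},\mathcal{H})\leadsto(\mathcal{E},\mathcal{R}\cup\{m:s\to u\},\mathcal{H}\cup\{m:s\stackrel{i}{\to}t\stackrel{j}{\to}u\})$ if $t\stackrel{j}{\to}_{\mathcal{R}}u$; (collapse) $(\mathcal{E},\mathcal{R}\cup\{i:s\to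 t\},\mathcal{H})\leadsto(\mathcal{E}\cup\{m:u\approx t\},\mathcal{R},\mathcal{H}\cup\{m:u\stackrel{j}{\leftarrow}s\stackrel{i}{\to}t\})$ if $s\stackrel{j}{\to}_{\mathcal{R}}u$. A run for $\mathcal{E}$ is a finite sequence of such steps starting from $\mathcal{E}_0=\{i:s\approx t\mid s\approx t\in\mathcal{E}\}$ (fresh positive index per equation), $\mathcal{R}_0=\varnothing$, $\mathcal{H}_0=\{i:s\stackrel{i}{\to}t\stackrel{0}{\approx}t\mid i:s\approx t\in\mathcal{E}_0\}$. Recall procedure: given a conversion (initially the join), repeatedly pick a step $t_1\stackrel{i}{\to}t_2$ (or its reverse) whose index $i$ is not an index of $\mathcal{E}_0$; for the rule/equation $i:\ell\to r$ there is a history entry $i:\ell\stackrel{j}{\circ_1}u\stackrel{k}{\circ_2}r$ in $\mathcal{H}_n$, and a position $p$ and substitution $\sigma$ with $t_1|_p=\ell\sigma$, $t_2|_p=r\sigma$; replace the step by $t_1\stackrel{j}{\circ_1}t_1[u\sigma]_p\stackrel{k}{\circ_2}t_2$ (reversed accordingly for reversed steps). *)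

theory Defs
  imports Main
begin

datatype ('f, 'v) trm = Var 'v | Fun 'f "('f, 'v) trm list"

type_synonym pos = "nat list"

fun is_pos :: "('f, 'v) trm \<Rightarrow> pos \<Rightarrow> bool" where
  "is_pos t [] = True"
| "is_pos (Var x) (i # p) = False"
| "is_pos (Fun f ts) (i # p) = (i < length ts \<and> is_pos (ts ! i) p)"

fun subt_at :: "('f, 'v) trm \<Rightarrow> pos \<Rightarrow> ('f, 'v) trm" where
  "subt_at t [] = t"
| "subt_at (Var x) (i # p) = Var x"
| "subt_at (Fun f ts) (i # p) = subt_at (ts ! i) p"

fun replace_at :: "('f, 'v) trm \<Rightarrow> pos \<Rightarrow> ('f, 'v) trm \<Rightarrow> ('f, 'v) trm" where
  "replace_at t [] s = s"
| "replace_at (Var x) (i # p) s = Var x"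
| "replace_at (Fun f ts) (i # p) s = Fun f (ts[i := replace_at (ts ! i) p s])"

fun subst :: "('f, 'v) trm \<Rightarrow> ('v \<Rightarrow> ('f, 'v) trm) \<Rightarrow> ('f, 'v) trm" where
  "subst (Var x) \<sigma> = \<sigma> x"
| "subst (Fun f ts) \<sigma> = Fun f (map (\<lambda>t. subst t \<sigma>) ts)"

definition rstep :: "('f, 'v) trm \<times> ('f, 'v) trm \<Rightarrow> ('f, 'v) trm \<Rightarrow> ('f, 'v) trm \<Rightarrow> bool" where
  "rstep lr s u \<longleftrightarrow> (\<exists>p \<sigma>. is_pos s p \<and> subt_at s p = subst (fst lr) \<sigma>
                              \<and> u = replace_at s p (subst (snd lr) \<sigma>))"

definition reduction_order :: "(('f, 'v) trm \<Rightarrow> ('f, 'v) trm \<Rightarrow> bool) \<Rightarrow> bool" where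
  "reduction_order gt \<longleftrightarrow>
     (\<forall>s. \<not> gt s s) \<and> transp gt \<and> wfP (\<lambda>x y. gt y x) \<and>
     (\<forall>s t \<sigma>. gt s t \<longrightarrow> gt (subst s \<sigma>) (subst t \<sigma>)) \<and>
     (\<forall>s t f ss ts. gt s t \<longrightarrow> gt (Fun f (ss @ s # ts)) (Fun f (ss @ t # ts)))"

datatype dir = Fw | Bw | Eq   \<comment> \<open>\<rightarrow>, \<leftarrow>, \<approx>\<close>

fun inv_dir :: "dir \<Rightarrow> dir" where
  "inv_dir Fw = Bw" | "inv_dir Bw = Fw" | "inv_dir Eq = Eq"

type_synonym ('f, 'v) ieq = "nat \<times> ('f, 'v) trm \<times> ('f, 'v) trm"

text \<open>HE i s o1 j u o2 k t  represents the history entry  i: s o1^j u o2^k t.\<close>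
datatype ('f, 'v) hentry = HE nat "('f, 'v) trm" dir nat "('f, 'v) trm" dir nat "('f, 'v) trm"

type_synonym ('f, 'v) state = "('f, 'v) ieq set \<times> ('f, 'v) ieq set \<times> ('f, 'v) hentry set"

definition rstep_idx :: "('f, 'v) ieq set \<Rightarrow> nat \<Rightarrow> ('f, 'v) trm \<Rightarrow> ('f, 'v) trm \<Rightarrow> bool" where
  "rstep_idx R j s u \<longleftrightarrow> (\<exists>l r. (j, l, r) \<in> R \<and> rstep (l, r) s u)"

fun hentry_idxs :: "('f, 'v) hentry \<Rightarrow> nat set" where
  "hentry_idxs (HE i s o1 j u o2 k t) = {i, j, k}"

text \<open>All indices used in a state (0 is always considered used, as the trivial index).\<close>
fun used_idxs :: "('f, 'v) state \<Rightarrow> nat set" where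
  "used_idxs (E, R, H) = insert 0 (fst ` E \<union> fst ` R \<union> \<Union> (hentry_idxs ` H))"

text \<open>One inference step of recording completion; m is the fresh index (used by the
  rules that create a new index).\<close>
inductive cstep :: "(('f, 'v) trm \<Rightarrow> ('f, 'v) trm \<Rightarrow> bool) \<Rightarrow> nat \<Rightarrow>
    ('f, 'v) state \<Rightarrow> ('f, 'v) state \<Rightarrow> bool" for gt where
  deduce: "rstep_idx R j u s \<Longrightarrow> rstep_idx R k u t \<Longrightarrow>
    cstep gt m (E, R, H) (E \<union> {(m, s, t)}, R, H \<union> {HE m s Bw j u Fw k t})"
| orient_left: "(i, s, t) \<in> E \<Longrightarrow> gt s t \<Longrightarrow>
    cstep gt m (E, R, H) (E - {(i, s, t)}, R \<union> {(i, s, t)}, H)"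
| orient_right: "(i, s, t) \<in> E \<Longrightarrow> HE i s o1 j u o2 k t \<in> H \<Longrightarrow> gt t s \<Longrightarrow>
    cstep gt m (E, R, H) (E - {(i, s, t)}, R \<union> {(i, t, s)},
      (H - {HE i s o1 j u o2 k t}) \<union> {HE i t (inv_dir o2) k u (inv_dir o1) j s})"
| simplify_left: "(i, s, t) \<in> E \<Longrightarrow> rstep_idx R l s u \<Longrightarrow>
    cstep gt m (E, R, H) ((E - {(i, s, t)}) \<union> {(m, u, t)}, R, H \<union> {HE m u Bw l s Fw i t})"
| simplify_right: "(i, s, t) \<in> E \<Longrightarrow> rstep_idx R l t u \<Longrightarrow>
    cstep gt m (E, R, H) ((E - {(i, s, t)}) \<union> {(m, s, u)}, R, H \<union> {HE m s Fw i t Fw l u})"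
| delete: "(i, s, s) \<in> E \<Longrightarrow> HE i s o1 j v o2 k s \<in> H \<Longrightarrow>
    cstep gt m (E, R, H) (E - {(i, s, s)}, R, H - {HE i s o1 j v o2 k s})"
| compose: "(i, s, t) \<in> R \<Longrightarrow> rstep_idx (R - {(i, s, t)}) j t u \<Longrightarrow>
    cstep gt m (E, R, H) (E, (R - {(i, s, t)}) \<union> {(m, s, u)}, H \<union> {HE m s Fw i t Fw j u})"
| collapse: "(i, s, t) \<in> R \<Longrightarrow> rstep_idx (R - {(i, s, t)}) j s u \<Longrightarrow>
    cstep gt m (E, R, H) (E \<union> {(m, u, t)}, R - {(i, s, t)}, H \<union> {HE m u Bw j s Fw i t})"

definition init_eqs :: "(('f, 'v) trm \<times> ('f, 'v) trm) set \<Rightarrow> ('f, 'v) ieq set \<Rightarrow> bool" where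
  "init_eqs E E0 \<longleftrightarrow> snd ` E0 = E \<and> inj_on fst E0 \<and> inj_on snd E0 \<and> 0 \<notin> fst ` E0"

definition init_hist :: "('f, 'v) ieq set \<Rightarrow> ('f, 'v) hentry set" where
  "init_hist E0 = {HE i s Fw i t Eq 0 t | i s t. (i, s, t) \<in> E0}"

definition run :: "(('f, 'v) trm \<Rightarrow> ('f, 'v) trm \<Rightarrow> bool) \<Rightarrow> ('f, 'v) ieq set \<Rightarrow>
    ('f, 'v) state list \<Rightarrow> bool" where
  "run gt E0 ss \<longleftrightarrow> ss \<noteq> [] \<and> ss ! 0 = (E0, {}, init_hist E0) \<and>
     (\<forall>k < length ss - 1. \<exists>m. (\<forall>l \<le> k. \<forall>x \<in> used_idxs (ss ! l). x < m) \<and>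
                               cstep gt m (ss ! k) (ss ! Suc k))"

type_synonym ('f, 'v) conv = "('f, 'v) trm \<times> (dir \<times> nat \<times> ('f, 'v) trm) list"

fun conv_steps :: "('f, 'v) trm \<Rightarrow> (dir \<times> nat \<times> ('f, 'v) trm) list \<Rightarrow>
    (('f, 'v) trm \<times> dir \<times> nat \<times> ('f, 'v) trm) list" where
  "conv_steps s [] = []"
| "conv_steps s ((d, i, t) # xs) = (s, d, i, t) # conv_steps t xs"

fun conv_last :: "('f, 'v) trm \<Rightarrow> (dir \<times> nat \<times> ('f, 'v) trm) list \<Rightarrow> ('f, 'v) trm" where
  "conv_last s [] = s"
| "conv_last s ((d, i, t) # xs) = conv_last t xs"

definition conv_end :: "('f, 'v) conv \<Rightarrow> ('f, 'v) trm" where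
  "conv_end c = conv_last (fst c) (snd c)"

fun R_step :: "('f, 'v) ieq set \<Rightarrow> ('f, 'v) trm \<times> dir \<times> nat \<times> ('f, 'v) trm \<Rightarrow> bool" where
  "R_step R (t1, d, i, t2) \<longleftrightarrow>
     (d = Fw \<and> rstep_idx R i t1 t2) \<or> (d = Bw \<and> rstep_idx R i t2 t1)"

definition is_join :: "('f, 'v) ieq set \<Rightarrow> ('f, 'v) trm \<Rightarrow> ('f, 'v) trm \<Rightarrow> ('f, 'v) conv \<Rightarrow> bool" where
  "is_join R s t c \<longleftrightarrow> fst c = s \<and> conv_end c = t \<and>
     (\<exists>fw bw. snd c = fw @ bw \<and> (\<forall>x \<in> set fw. fst x = Fw) \<and> (\<forall>x \<in> set bw. fst x = Bw)) \<and>
     (\<forall>st \<in> set (conv_steps (fst c) (snd c)). R_step R st)"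

text \<open>One step of the recall procedure, w.r.t. the set I of indices of E0 and the final
  history H. A step t1 \<rightarrow>^i t2 (i not in I) with history entry i: l o1^j u o2^k r and
  t1|_p = l\<sigma>, t2 = t1[r\<sigma>]_p is replaced by t1 o1^j t1[u\<sigma>]_p o2^k t2; reversed steps
  are treated symmetrically.\<close>
definition recall_step :: "nat set \<Rightarrow> ('f, 'v) hentry set \<Rightarrow> ('f, 'v) conv \<Rightarrow> ('f, 'v) conv \<Rightarrow> bool" where
  "recall_step I H c c' \<longleftrightarrow> fst c' = fst c \<and>
     (\<exists>pre d i t2 post l o1 j u o2 k r p \<sigma>.
        snd c = pre @ (d, i, t2) # post \<and> i \<notin> I \<and> HE i l o1 j u o2 k r \<in> H \<and>
        (let t1 = conv_last (fst c) pre in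
          (d = Fw \<and> is_pos t1 p \<and> subt_at t1 p = subst l \<sigma> \<and>
             t2 = replace_at t1 p (subst r \<sigma>) \<and>
             snd c' = pre @ (o1, j, replace_at t1 p (subst u \<sigma>)) # (o2, k, t2) # post)
        \<or> (d = Bw \<and> is_pos t2 p \<and> subt_at t2 p = subst l \<sigma> \<and>
             t1 = replace_at t2 p (subst r \<sigma>) \<and>
             snd c' = pre @ (inv_dir o2, k, replace_at t2 p (subst u \<sigma>)) # (inv_dir o1, j, t2) # post)))"

fun E_step :: "('f, 'v) ieq set \<Rightarrow> ('f, 'v) trm \<times> dir \<times> nat \<times> ('f, 'v) trm \<Rightarrow> bool" where
  "E_step E0 (t1, d, i, t2) \<longleftrightarrow>
     (i = 0 \<and> d = Eq \<and> t1 = t2) \<or>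
     (\<exists>l r. (i, l, r) \<in> E0 \<and> (rstep (l, r) t1 t2 \<or> rstep (l, r) t2 t1))"

end

theory Submission imports Defs begin

lemma subst_subst: "subst (subst t \<sigma>) \<tau> = subst t (\<lambda>x. subst (\<sigma> x) \<tau>)"
  by (induction t) auto

lemma pos_subst: "is_pos t q \<Longrightarrow> is_pos (subst t \<sigma>) q \<and> subt_at (subst t \<sigma>) q = subst (subt_at t q) \<sigma>
   \<and> replace_at (subst t \<sigma>) q (subst s \<sigma>) = subst (replace_at t q s) \<sigma>"
  by (induction t q rule: is_pos.induct) (auto simp: map_update)

lemma pos_replace: "is_pos t p \<Longrightarrow> is_pos (replace_at t p s) (p @ q) = is_pos s q
   \<and> subt_at (replace_at t p s) (p @ q) = subt_at s q
   \<and> replace_at (replace_at t p s) (p @ q) u = replace_at t p (replace_at s q u)"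
  by (induction t p rule: is_pos.induct) auto

lemma replace_id: "is_pos t p \<Longrightarrow> replace_at t p (subt_at t p) = t"
  by (induction t p rule: is_pos.induct) auto

lemma rstep_swap: "rstep (l, r) a b \<Longrightarrow> rstep (r, l) b a"
proof -
  assume "rstep (l, r) a b"
  then obtain p \<sigma> where p: "is_pos a p" "subt_at a p = subst l \<sigma>" "b = replace_at a p (subst r \<sigma>)"
    unfolding rstep_def by auto
  have 1: "is_pos b p" "subt_at b p = subst r \<sigma>" "replace_at b p (subst l \<sigma>) = a"
    using pos_replace[OF p(1), of "subst r \<sigma>" "[]"] p replace_id[OF p(1)] by auto
  show ?thesis unfolding rstep_def using 1 by auto
qed

lemma rstep_ctxt: "rstep (l, r) a b \<Longrightarrow> is_pos C p \<Longrightarrow>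
   rstep (l, r) (replace_at C p (subst a \<sigma>)) (replace_at C p (subst b \<sigma>))"
proof -
  assume "rstep (l, r) a b" and C: "is_pos C p"
  then obtain q \<tau> where q: "is_pos a q" "subt_at a q = subst l \<tau>" "b = replace_at a q (subst r \<tau>)"
    unfolding rstep_def by auto
  from pos_subst[OF q(1), of \<sigma> "subst r \<tau>"] q
  have 1: "is_pos (subst a \<sigma>) q" "subt_at (subst a \<sigma>) q = subst l (\<lambda>x. subst (\<tau> x) \<sigma>)"
     "subst b \<sigma> = replace_at (subst a \<sigma>) q (subst r (\<lambda>x. subst (\<tau> x) \<sigma>))"
    by (auto simp: subst_subst)
  from pos_replace[OF C, of "subst a \<sigma>" q] 1 show ?thesis unfolding rstep_def
    by (intro exI[of _ "p @ q"] exI[of _ "\<lambda>x. subst (\<tau> x) \<sigma>"]) auto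
qed


definition valid :: "('f, 'v) ieq set \<Rightarrow> ('f, 'v) hentry set \<Rightarrow> ('f, 'v) trm \<Rightarrow> dir \<Rightarrow> nat \<Rightarrow> ('f, 'v) trm \<Rightarrow> bool" where
  "valid E0 H a d i b \<longleftrightarrow> (i = 0 \<and> d = Eq \<and> a = b) \<or>
     (i \<in> fst ` E0 \<and> (\<exists>l r. (i, l, r) \<in> E0 \<and> (rstep (l, r) a b \<or> rstep (l, r) b a))) \<or>
     (i \<notin> fst ` E0 \<and> (\<exists>l o1 j u o2 k r. HE i l o1 j u o2 k r \<in> H \<and>
        ((d = Fw \<and> rstep (l, r) a b) \<or> (d = Bw \<and> rstep (l, r) b a))))"

lemma valid_sym: "valid E0 H a d i b \<longleftrightarrow> valid E0 H b (inv_dir d) i a"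
  by (cases d) (auto simp: valid_def)

lemma valid_mono: "valid E0 H a d i b \<Longrightarrow> H \<subseteq> H' \<Longrightarrow> valid E0 H' a d i b"
  unfolding valid_def by (smt (verit) subsetD)

lemma valid_local: "(\<And>l o1 j u o2 k r. HE i l o1 j u o2 k r \<in> H \<longleftrightarrow> HE i l o1 j u o2 k r \<in> H') \<Longrightarrow>
   valid E0 H a d i b \<longleftrightarrow> valid E0 H' a d i b"
  unfolding valid_def by simp

lemma valid_ctxt: "valid E0 H a d i b \<Longrightarrow> is_pos C p \<Longrightarrow>
   valid E0 H (replace_at C p (subst a \<sigma>)) d i (replace_at C p (subst b \<sigma>))"
  unfolding valid_def using rstep_ctxt by metis

definition cinv :: "('f, 'v) ieq set \<Rightarrow> ('f, 'v) ieq set \<Rightarrow> ('f, 'v) ieq set \<Rightarrow> ('f, 'v) hentry set \<Rightarrow> bool" where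
  "cinv E0 E R H \<longleftrightarrow> inj_on fst (E \<union> R) \<and> fst ` E \<inter> fst ` R = {} \<and>
    (\<forall>i l r. (i, l, r) \<in> E \<union> R \<longrightarrow> (i \<in> fst ` E0 \<longrightarrow> (i, l, r) \<in> E0 \<or> (i, r, l) \<in> E0) \<and>
       (i \<notin> fst ` E0 \<longrightarrow> (\<exists>o1 j u o2 k. HE i l o1 j u o2 k r \<in> H))) \<and>
    (\<forall>i l o1 j u o2 k r. HE i l o1 j u o2 k r \<in> H \<longrightarrow> i \<notin> fst ` E0 \<longrightarrow>
       valid E0 H l o1 j u \<and> valid E0 H u o2 k r \<and> j < i \<and> k < i) \<and>
    (\<forall>i s t x l o1 j u o2 k r. (i, s, t) \<in> E \<longrightarrow> HE x l o1 j u o2 k r \<in> H \<longrightarrow> x \<noteq> i \<longrightarrow> j \<noteq> i \<and> k \<noteq> i)"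

lemma rule_valid: "cinv E0 E R H \<Longrightarrow> (y, l, r) \<in> E \<union> R \<Longrightarrow> rstep (l, r) a b \<Longrightarrow>
   valid E0 H a Fw y b \<and> valid E0 H b Bw y a"
  unfolding cinv_def valid_def using rstep_swap by (smt (verit) dir.distinct(1) image_eqI fst_conv)


lemma cinvD:
  assumes "cinv E0 E R H"
  shows "inj_on fst (E \<union> R)" "fst ` E \<inter> fst ` R = {}"
    "\<And>i l r. (i, l, r) \<in> E \<union> R \<Longrightarrow> i \<in> fst ` E0 \<Longrightarrow> (i, l, r) \<in> E0 \<or> (i, r, l) \<in> E0"
    "\<And>i l r. (i, l, r) \<in> E \<union> R \<Longrightarrow> i \<notin> fst ` E0 \<Longrightarrow> \<exists>o1 j u o2 k. HE i l o1 j u o2 k r \<in> H"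
    "\<And>i l o1 j u o2 k r. HE i l o1 j u o2 k r \<in> H \<Longrightarrow> i \<notin> fst ` E0 \<Longrightarrow>
       valid E0 H l o1 j u \<and> valid E0 H u o2 k r \<and> j < i \<and> k < i"
    "\<And>i s t x l o1 j u o2 k r. (i, s, t) \<in> E \<Longrightarrow> HE x l o1 j u o2 k r \<in> H \<Longrightarrow> x \<noteq> i \<Longrightarrow> j \<noteq> i \<and> k \<noteq> i"
proof -
  note A = assms[unfolded cinv_def]
  show "inj_on fst (E \<union> R)" "fst ` E \<inter> fst ` R = {}" using A by simp_all
  show "\<And>i l r. (i, l, r) \<in> E \<union> R \<Longrightarrow> i \<in> fst ` E0 \<Longrightarrow> (i, l, r) \<in> E0 \<or> (i, r, l) \<in> E0"
    using A by metis
  show "\<And>i l r. (i, l, r) \<in> E \<union> R \<Longrightarrow> i \<notin> fst ` E0 \<Longrightarrow> \<exists>o1 j u o2 k. HE i l o1 j u o2 k r \<in> H"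
    using A by metis
  show "\<And>i l o1 j u o2 k r. HE i l o1 j u o2 k r \<in> H \<Longrightarrow> i \<notin> fst ` E0 \<Longrightarrow>
       valid E0 H l o1 j u \<and> valid E0 H u o2 k r \<and> j < i \<and> k < i" using A by metis
  show "\<And>i s t x l o1 j u o2 k r. (i, s, t) \<in> E \<Longrightarrow> HE x l o1 j u o2 k r \<in> H \<Longrightarrow> x \<noteq> i \<Longrightarrow> j \<noteq> i \<and> k \<noteq> i"
    using A by metis
qed

lemma cinvI:
  assumes "inj_on fst (E \<union> R)" "fst ` E \<inter> fst ` R = {}"
    "\<And>i l r. (i, l, r) \<in> E \<union> R \<Longrightarrow> i \<in> fst ` E0 \<Longrightarrow> (i, l, r) \<in> E0 \<or> (i, r, l) \<in> E0"
    "\<And>i l r. (i, l, r) \<in> E \<union> R \<Longrightarrow> i \<notin> fst ` E0 \<Longrightarrow> \<exists>o1 j u o2 k. HE i l o1 j u o2 k r \<in> H"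
    "\<And>i l o1 j u o2 k r. HE i l o1 j u o2 k r \<in> H \<Longrightarrow> i \<notin> fst ` E0 \<Longrightarrow>
       valid E0 H l o1 j u \<and> valid E0 H u o2 k r \<and> j < i \<and> k < i"
    "\<And>i s t x l o1 j u o2 k r. (i, s, t) \<in> E \<Longrightarrow> HE x l o1 j u o2 k r \<in> H \<Longrightarrow> x \<noteq> i \<Longrightarrow> j \<noteq> i \<and> k \<noteq> i"
  shows "cinv E0 E R H"
  unfolding cinv_def
  apply (intro conjI allI impI)
  using assms by simp_all

lemma fresh_facts:
  assumes "\<forall>x \<in> used_idxs (E, R, H). x < m"
  shows "\<And>i l r. (i, l, r) \<in> E \<Longrightarrow> i < m" "\<And>i l r. (i, l, r) \<in> R \<Longrightarrow> i < m"
    "\<And>i l o1 j u o2 k r. HE i l o1 j u o2 k r \<in> H \<Longrightarrow> i < m \<and> j < m \<and> k < m"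
  using assms by (auto; force)+

lemma rstep_idx_valid: "cinv E0 E R H \<Longrightarrow> rstep_idx R y a b \<Longrightarrow>
   valid E0 H a Fw y b \<and> valid E0 H b Bw y a \<and> y \<in> fst ` R"
  unfolding rstep_idx_def using rule_valid by (metis UnI2 fst_conv image_eqI)

lemma subst_Var[simp]: "subst t Var = t"
  by (induction t) (auto simp: map_idI)

lemma self_rstep: "rstep (l, r) l r"
  unfolding rstep_def by (intro exI[of _ "[]"] exI[of _ Var]) auto

lemma deduce_inv:
  assumes I: "cinv E0 E R H" and fr: "\<forall>x \<in> used_idxs (E, R, H). x < m" and fr0: "\<forall>x \<in> fst ` E0. x < m"
    and j: "rstep_idx R j u s" and k: "rstep_idx R k u t"
  shows "cinv E0 (E \<union> {(m, s, t)}) R (H \<union> {HE m s Bw j u Fw k t})"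
proof -
  note F = fresh_facts[OF fr]
  note D = cinvD[OF I]
  have mI: "m \<notin> fst ` E0" using fr0 by auto
  have vj: "valid E0 H s Bw j u" "j \<in> fst ` R" using rstep_idx_valid[OF I j] by auto
  have vk: "valid E0 H u Fw k t" "k \<in> fst ` R" using rstep_idx_valid[OF I k] by auto
  have jm: "j < m" "k < m" using vj vk F by auto
  let ?H' = "H \<union> {HE m s Bw j u Fw k t}"
  have mE: "m \<notin> fst ` E" "m \<notin> fst ` R" using F(1,2) by (metis imageE less_irrefl prod.collapse)+
  show ?thesis
  proof (rule cinvI)
    have "(E \<union> {(m, s, t)}) \<union> R = insert (m, s, t) (E \<union> R)" by auto
    moreover have "m \<notin> fst ` (E \<union> R - {(m, s, t)})" using mE by auto
    ultimately show "inj_on fst ((E \<union> {(m, s, t)}) \<union> R)" using D(1) by (simp add: inj_on_insert)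
    show "fst ` (E \<union> {(m, s, t)}) \<inter> fst ` R = {}" using D(2) mE by auto
  next
    fix i l r assume a: "(i, l, r) \<in> E \<union> {(m, s, t)} \<union> R" "i \<in> fst ` E0"
    then have "(i, l, r) \<in> E \<union> R" using mI by auto
    then show "(i, l, r) \<in> E0 \<or> (i, r, l) \<in> E0" using D(3) a by blast
  next
    fix i l r assume a: "(i, l, r) \<in> E \<union> {(m, s, t)} \<union> R" "i \<notin> fst ` E0"
    then consider "(i, l, r) \<in> E \<union> R" | "(i, l, r) = (m, s, t)" by blast
    then show "\<exists>o1 j u o2 k. HE i l o1 j u o2 k r \<in> ?H'"
    proof cases
      case 1 then show ?thesis using D(4)[OF 1 a(2)] by blast
    next
      case 2 then show ?thesis by blast
    qed
  next
    fix i l o1 j' u' o2 k' r assume a: "HE i l o1 j' u' o2 k' r \<in> ?H'" "i \<notin> fst ` E0"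
    then consider "HE i l o1 j' u' o2 k' r \<in> H" | "HE i l o1 j' u' o2 k' r = HE m s Bw j u Fw k t" by blast
    then show "valid E0 ?H' l o1 j' u' \<and> valid E0 ?H' u' o2 k' r \<and> j' < i \<and> k' < i"
    proof cases
      case 1 then show ?thesis using D(5)[OF 1 a(2)] valid_mono[of E0 H _ _ _ _ ?H'] by blast
    next
      case 2 then show ?thesis using vj vk jm valid_mono[of E0 H _ _ _ _ ?H'] by auto
    qed
  next
    fix i s' t' x l o1 j' u' o2 k' r
    assume a: "(i, s', t') \<in> E \<union> {(m, s, t)}" "HE x l o1 j' u' o2 k' r \<in> ?H'" "x \<noteq> i"
    show "j' \<noteq> i \<and> k' \<noteq> i"
    proof (cases "HE x l o1 j' u' o2 k' r \<in> H")
      case True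
      show ?thesis
      proof (cases "(i, s', t') \<in> E")
        case True then show ?thesis using D(6) \<open>HE x l o1 j' u' o2 k' r \<in> H\<close> a(3) by blast
      next
        case False then have "i = m" using a by auto
        then show ?thesis using F(3)[OF \<open>HE x l o1 j' u' o2 k' r \<in> H\<close>] by auto
      qed
    next
      case False then have e: "x = m" "j' = j" "k' = k" using a by auto
      then have "i \<noteq> m" using a by auto
      then have "i \<in> fst ` E" using a by force
      then show ?thesis using e vj vk D(2) by auto
    qed
  qed
qed

lemma valid_remove: "valid E0 H a d y b \<Longrightarrow> y \<noteq> i \<Longrightarrow> valid E0 (H - {HE i l1 p1 j1 u1 p2 k1 r1}) a d y b"
  unfolding valid_def by auto

lemma orient_left_inv:
  assumes I: "cinv E0 E R H" and e: "(i, s, t) \<in> E"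
  shows "cinv E0 (E - {(i, s, t)}) (R \<union> {(i, s, t)}) H"
proof -
  note D = cinvD[OF I]
  have U: "(E - {(i, s, t)}) \<union> (R \<union> {(i, s, t)}) = E \<union> R" using e by auto
  have iE: "i \<notin> fst ` (E - {(i, s, t)})"
  proof
    assume "i \<in> fst ` (E - {(i, s, t)})"
    then obtain x where x: "x \<in> E - {(i, s, t)}" "fst x = i" by auto
    then have "x = (i, s, t)" using D(1) e inj_onD[OF D(1), of x "(i, s, t)"] by auto
    then show False using x by auto
  qed
  show ?thesis
  proof (rule cinvI)
    show "inj_on fst ((E - {(i, s, t)}) \<union> (R \<union> {(i, s, t)}))" using U D(1) by simp
    show "fst ` (E - {(i, s, t)}) \<inter> fst ` (R \<union> {(i, s, t)}) = {}" using D(2) iE by auto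
    show "\<And>x l r. (x, l, r) \<in> (E - {(i, s, t)}) \<union> (R \<union> {(i, s, t)}) \<Longrightarrow> x \<in> fst ` E0 \<Longrightarrow> (x, l, r) \<in> E0 \<or> (x, r, l) \<in> E0"
      unfolding U by (rule D(3))
    show "\<And>x l r. (x, l, r) \<in> (E - {(i, s, t)}) \<union> (R \<union> {(i, s, t)}) \<Longrightarrow> x \<notin> fst ` E0 \<Longrightarrow> \<exists>o1 j u o2 k. HE x l o1 j u o2 k r \<in> H"
      unfolding U by (rule D(4))
    show "\<And>i l o1 j u o2 k r. HE i l o1 j u o2 k r \<in> H \<Longrightarrow> i \<notin> fst ` E0 \<Longrightarrow>
       valid E0 H l o1 j u \<and> valid E0 H u o2 k r \<and> j < i \<and> k < i" by (rule D(5))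
    show "\<And>i' s' t' x l o1 j u o2 k r. (i', s', t') \<in> E - {(i, s, t)} \<Longrightarrow> HE x l o1 j u o2 k r \<in> H \<Longrightarrow> x \<noteq> i' \<Longrightarrow> j \<noteq> i' \<and> k \<noteq> i'"
      using D(6) by blast
  qed
qed

lemma idx_unique:
  assumes "cinv E0 E R H" "(i, s, t) \<in> E \<union> R" "(i, s', t') \<in> E \<union> R"
  shows "s' = s \<and> t' = t"
  using inj_onD[OF cinvD(1)[OF assms(1)] _ assms(2,3)] by auto

lemma idx_unique_ER:
  assumes "cinv E0 E R H" "(i, s, t) \<in> E"
  shows "(i, s', t') \<notin> R"
  using cinvD(2)[OF assms(1)] assms(2) by force

lemma orient_right_inv:
  assumes I: "cinv E0 E R H" and e: "(i, s, t) \<in> E" and h: "HE i s o1 j u o2 k t \<in> H"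
  shows "cinv E0 (E - {(i, s, t)}) (R \<union> {(i, t, s)})
      ((H - {HE i s o1 j u o2 k t}) \<union> {HE i t (inv_dir o2) k u (inv_dir o1) j s})"
    (is "cinv E0 ?E ?R ?H")
proof -
  note D = cinvD[OF I]
  have iR: "i \<notin> fst ` R" using D(2) e by force
  have iE: "i \<notin> fst ` ?E"
  proof
    assume "i \<in> fst ` ?E"
    then obtain l r where x: "(i, l, r) \<in> E - {(i, s, t)}" by force
    then show False using idx_unique[OF I, of i s t l r] e by auto
  qed
  have U: "?E \<union> ?R = insert (i, t, s) ((E \<union> R) - {(i, s, t)})" using iR by force
  have loc: "\<And>a d y b. y \<noteq> i \<Longrightarrow> valid E0 H a d y b \<Longrightarrow> valid E0 ?H a d y b"
    using valid_remove valid_mono by (metis Un_upper1)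
  show ?thesis
  proof (rule cinvI)
    have "inj_on fst ((E \<union> R) - {(i, s, t)})" using D(1) by (rule inj_on_subset) auto
    moreover have "i \<notin> fst ` ((E \<union> R) - {(i, s, t)})" using iE iR by auto
    moreover have "fst ` ((E \<union> R) - {(i, s, t)} - {(i, t, s)}) \<subseteq> fst ` ((E \<union> R) - {(i, s, t)})" by blast
    ultimately show "inj_on fst (?E \<union> ?R)" unfolding U inj_on_insert by auto
    show "fst ` ?E \<inter> fst ` ?R = {}" using D(2) iE by auto
  next
    fix x l r assume a: "(x, l, r) \<in> ?E \<union> ?R" "x \<in> fst ` E0"
    show "(x, l, r) \<in> E0 \<or> (x, r, l) \<in> E0"
    proof (cases "(x, l, r) = (i, t, s)")
      case True then show ?thesis using D(3)[of i s t] e a by auto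
    next
      case False then have "(x, l, r) \<in> E \<union> R" using a(1)[unfolded U] by blast
      then show ?thesis using D(3) a(2) by blast
    qed
  next
    fix x l r assume a: "(x, l, r) \<in> ?E \<union> ?R" "x \<notin> fst ` E0"
    show "\<exists>o1 j u o2 k. HE x l o1 j u o2 k r \<in> ?H"
    proof (cases "(x, l, r) = (i, t, s)")
      case True then show ?thesis by blast
    next
      case False then have m: "(x, l, r) \<in> E \<union> R - {(i, s, t)}" using a(1)[unfolded U] by blast
      have "x \<noteq> i"
      proof
        assume "x = i"
        with m have "(i, l, r) \<in> E \<union> R" "(l, r) \<noteq> (s, t)" by auto
        with idx_unique[OF I _ this(1), of s t] e show False by auto
      qed
      obtain o1 j u o2 k where "HE x l o1 j u o2 k r \<in> H" using D(4)[OF DiffD1[OF m] a(2)] by blast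
      with \<open>x \<noteq> i\<close> show ?thesis by blast
    qed
  next
    fix y l p1 j1 u1 p2 k1 r assume a: "HE y l p1 j1 u1 p2 k1 r \<in> ?H" "y \<notin> fst ` E0"
    show "valid E0 ?H l p1 j1 u1 \<and> valid E0 ?H u1 p2 k1 r \<and> j1 < y \<and> k1 < y"
    proof (cases "HE y l p1 j1 u1 p2 k1 r = HE i t (inv_dir o2) k u (inv_dir o1) j s")
      case True
      then have eq: "y = i" "l = t" "p1 = inv_dir o2" "j1 = k" "u1 = u" "p2 = inv_dir o1" "k1 = j" "r = s" by auto
      have old: "valid E0 H s o1 j u" "valid E0 H u o2 k t" "j < i" "k < i" using D(5)[OF h] a eq by auto
      have "valid E0 H t (inv_dir o2) k u" using old(2) valid_sym[of E0 H u o2 k t] by simp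
      moreover have "valid E0 H u (inv_dir o1) j s" using old(1) valid_sym[of E0 H s o1 j u] by simp
      ultimately show ?thesis unfolding eq using old(3,4) loc[of k] loc[of j] by simp
    next
      case False
      then have hH: "HE y l p1 j1 u1 p2 k1 r \<in> H" using a by auto
      have old: "valid E0 H l p1 j1 u1" "valid E0 H u1 p2 k1 r" "j1 < y" "k1 < y" using D(5)[OF hH a(2)] by auto
      have "j1 \<noteq> i \<and> k1 \<noteq> i"
      proof (cases "y = i")
        case True then show ?thesis using old by auto
      next
        case False then show ?thesis using D(6)[OF e hH] by auto
      qed
      then show ?thesis using old loc by auto
    qed
  next
    fix x s' t' y l p1 j1 u1 p2 k1 r
    assume a: "(x, s', t') \<in> ?E" "HE y l p1 j1 u1 p2 k1 r \<in> ?H" "y \<noteq> x"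
    show "j1 \<noteq> x \<and> k1 \<noteq> x"
    proof (cases "HE y l p1 j1 u1 p2 k1 r = HE i t (inv_dir o2) k u (inv_dir o1) j s")
      case True then show ?thesis using D(6)[OF _ h, of x s' t'] a by auto
    next
      case False then show ?thesis using D(6)[of x s' t' y l p1 j1 u1 p2 k1 r] a by auto
    qed
  qed
qed

lemma add_inv:
  assumes I: "cinv E0 E R H" and fr: "\<forall>x \<in> used_idxs (E, R, H). x < m" and fr0: "\<forall>x \<in> fst ` E0. x < m"
    and sE: "E' \<subseteq> insert (m, a, b) E" and sR: "R' \<subseteq> insert (m, a, b) R"
    and mem: "(m, a, b) \<in> E' \<union> R'" and nboth: "\<not> ((m, a, b) \<in> E' \<and> (m, a, b) \<in> R')"
    and v1: "valid E0 H a o1 j u" and v2: "valid E0 H u o2 k b" and jk: "j < m" "k < m"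
    and refs: "\<And>x s' t'. (x, s', t') \<in> E' \<Longrightarrow> x \<noteq> m \<Longrightarrow> j \<noteq> x \<and> k \<noteq> x"
  shows "cinv E0 E' R' (H \<union> {HE m a o1 j u o2 k b})"
proof -
  note F = fresh_facts[OF fr]
  note D = cinvD[OF I]
  have mI: "m \<notin> fst ` E0" using fr0 by auto
  let ?H' = "H \<union> {HE m a o1 j u o2 k b}"
  have mE: "m \<notin> fst ` E" "m \<notin> fst ` R" using F(1,2) by (metis imageE less_irrefl prod.collapse)+
  have sub: "E' \<union> R' \<subseteq> insert (m, a, b) (E \<union> R)" using sE sR by blast
  show ?thesis
  proof (rule cinvI)
    have "inj_on fst (insert (m, a, b) (E \<union> R))"
      using D(1) mE by (auto simp: inj_on_insert)
    then show "inj_on fst (E' \<union> R')" using sub by (rule inj_on_subset)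
    have "fst ` E' \<subseteq> insert m (fst ` E)" "fst ` R' \<subseteq> insert m (fst ` R)" using sE sR by force+
    moreover have "m \<notin> fst ` E' \<or> m \<notin> fst ` R'"
    proof (rule ccontr)
      assume "\<not> ?thesis"
      then obtain a1 b1 a2 b2 where "(m, a1, b1) \<in> E'" "(m, a2, b2) \<in> R'" by force
      then have "(m, a1, b1) = (m, a, b)" "(m, a2, b2) = (m, a, b)" using sE sR mE by force+
      then show False using nboth \<open>(m, a1, b1) \<in> E'\<close> \<open>(m, a2, b2) \<in> R'\<close> by simp
    qed
    ultimately show "fst ` E' \<inter> fst ` R' = {}" using D(2) by blast
  next
    fix x l r assume a: "(x, l, r) \<in> E' \<union> R'" "x \<in> fst ` E0"
    then have "(x, l, r) \<in> E \<union> R" using mI sub by blast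
    then show "(x, l, r) \<in> E0 \<or> (x, r, l) \<in> E0" using D(3) a(2) by blast
  next
    fix x l r assume a: "(x, l, r) \<in> E' \<union> R'" "x \<notin> fst ` E0"
    then consider "(x, l, r) \<in> E \<union> R" | "(x, l, r) = (m, a, b)" using sub by blast
    then show "\<exists>o1 j u o2 k. HE x l o1 j u o2 k r \<in> ?H'"
    proof cases
      case 1 then show ?thesis using D(4)[OF 1 a(2)] by blast
    next
      case 2 then show ?thesis by blast
    qed
  next
    fix i l p1 j' u' p2 k' r assume a: "HE i l p1 j' u' p2 k' r \<in> ?H'" "i \<notin> fst ` E0"
    then consider "HE i l p1 j' u' p2 k' r \<in> H" | "HE i l p1 j' u' p2 k' r = HE m a o1 j u o2 k b" by blast
    then show "valid E0 ?H' l p1 j' u' \<and> valid E0 ?H' u' p2 k' r \<and> j' < i \<and> k' < i"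
    proof cases
      case 1 then show ?thesis using D(5)[OF 1 a(2)] valid_mono[of E0 H _ _ _ _ ?H'] by blast
    next
      case 2 then show ?thesis using v1 v2 jk valid_mono[of E0 H _ _ _ _ ?H'] by auto
    qed
  next
    fix i s' t' x l p1 j' u' p2 k' r
    assume a: "(i, s', t') \<in> E'" "HE x l p1 j' u' p2 k' r \<in> ?H'" "x \<noteq> i"
    show "j' \<noteq> i \<and> k' \<noteq> i"
    proof (cases "HE x l p1 j' u' p2 k' r \<in> H")
      case True
      show ?thesis
      proof (cases "(i, s', t') \<in> E")
        case True then show ?thesis using D(6) \<open>HE x l p1 j' u' p2 k' r \<in> H\<close> a(3) by blast
      next
        case False then have "i = m" using a sE by auto
        then show ?thesis using F(3)[OF \<open>HE x l p1 j' u' p2 k' r \<in> H\<close>] by auto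
      qed
    next
      case False then have e: "x = m" "j' = j" "k' = k" using a by auto
      then show ?thesis using refs[OF a(1)] a(3) by auto
    qed
  qed
qed

lemma fresh_notin: "\<forall>x \<in> used_idxs (E, R, H). x < m \<Longrightarrow> (m, a, b) \<notin> E \<and> (m, a, b) \<notin> R"
  using fresh_facts(1,2) by blast

lemma idx_ne_ER: "cinv E0 E R H \<Longrightarrow> y \<in> fst ` R \<Longrightarrow> (x, s, t) \<in> E \<Longrightarrow> y \<noteq> x"
  using cinvD(2) by force

lemma idx_ne_rm: "cinv E0 E R H \<Longrightarrow> (i, s, t) \<in> E \<union> R \<Longrightarrow> (x, s', t') \<in> (E \<union> R) - {(i, s, t)} \<Longrightarrow> i \<noteq> x"
  using idx_unique by blast

lemma simplify_left_inv:
  assumes I: "cinv E0 E R H" and fr: "\<forall>x \<in> used_idxs (E, R, H). x < m" and fr0: "\<forall>x \<in> fst ` E0. x < m"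
    and e: "(i, s, t) \<in> E" and l: "rstep_idx R l s u"
  shows "cinv E0 ((E - {(i, s, t)}) \<union> {(m, u, t)}) R (H \<union> {HE m u Bw l s Fw i t})"
proof (rule add_inv[OF I fr fr0])
  have vl: "valid E0 H u Bw l s" "l \<in> fst ` R" using rstep_idx_valid[OF I l] by auto
  show "valid E0 H u Bw l s" by (fact vl(1))
  show "valid E0 H s Fw i t" using rule_valid[OF I _ self_rstep] e by blast
  show "l < m" using vl(2) fresh_facts(2)[OF fr] by force
  show "i < m" using fresh_facts(1)[OF fr] e by blast
  show "\<not> ((m, u, t) \<in> E - {(i, s, t)} \<union> {(m, u, t)} \<and> (m, u, t) \<in> R)" using fresh_notin[OF fr] by blast
  show "\<And>x s' t'. (x, s', t') \<in> E - {(i, s, t)} \<union> {(m, u, t)} \<Longrightarrow> x \<noteq> m \<Longrightarrow> l \<noteq> x \<and> i \<noteq> x"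
  proof -
    fix x s' t' assume a: "(x, s', t') \<in> E - {(i, s, t)} \<union> {(m, u, t)}" "x \<noteq> m"
    then have x: "(x, s', t') \<in> E - {(i, s, t)}" by auto
    show "l \<noteq> x \<and> i \<noteq> x" using idx_ne_ER[OF I vl(2)] idx_ne_rm[OF I _, of i s t x s' t'] x e by blast
  qed
qed auto

lemma simplify_right_inv:
  assumes I: "cinv E0 E R H" and fr: "\<forall>x \<in> used_idxs (E, R, H). x < m" and fr0: "\<forall>x \<in> fst ` E0. x < m"
    and e: "(i, s, t) \<in> E" and l: "rstep_idx R l t u"
  shows "cinv E0 ((E - {(i, s, t)}) \<union> {(m, s, u)}) R (H \<union> {HE m s Fw i t Fw l u})"
proof (rule add_inv[OF I fr fr0])
  have vl: "valid E0 H t Fw l u" "l \<in> fst ` R" using rstep_idx_valid[OF I l] by auto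
  show "valid E0 H t Fw l u" by (fact vl(1))
  show "valid E0 H s Fw i t" using rule_valid[OF I _ self_rstep] e by blast
  show "l < m" using vl(2) fresh_facts(2)[OF fr] by force
  show "i < m" using fresh_facts(1)[OF fr] e by blast
  show "\<not> ((m, s, u) \<in> E - {(i, s, t)} \<union> {(m, s, u)} \<and> (m, s, u) \<in> R)" using fresh_notin[OF fr] by blast
  show "\<And>x s' t'. (x, s', t') \<in> E - {(i, s, t)} \<union> {(m, s, u)} \<Longrightarrow> x \<noteq> m \<Longrightarrow> i \<noteq> x \<and> l \<noteq> x"
  proof -
    fix x s' t' assume a: "(x, s', t') \<in> E - {(i, s, t)} \<union> {(m, s, u)}" "x \<noteq> m"
    then have x: "(x, s', t') \<in> E - {(i, s, t)}" by auto
    show "i \<noteq> x \<and> l \<noteq> x" using idx_ne_ER[OF I vl(2)] idx_ne_rm[OF I _, of i s t x s' t'] x e by blast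
  qed
qed auto

lemma rstep_idx_mono: "rstep_idx R' j a b \<Longrightarrow> R' \<subseteq> R \<Longrightarrow> rstep_idx R j a b"
  unfolding rstep_idx_def by blast

lemma compose_inv:
  assumes I: "cinv E0 E R H" and fr: "\<forall>x \<in> used_idxs (E, R, H). x < m" and fr0: "\<forall>x \<in> fst ` E0. x < m"
    and e: "(i, s, t) \<in> R" and j0: "rstep_idx (R - {(i, s, t)}) j t u"
  shows "cinv E0 E ((R - {(i, s, t)}) \<union> {(m, s, u)}) (H \<union> {HE m s Fw i t Fw j u})"
proof (rule add_inv[OF I fr fr0])
  have j: "rstep_idx R j t u" using rstep_idx_mono[OF j0] by blast
  have vl: "valid E0 H t Fw j u" "j \<in> fst ` R" using rstep_idx_valid[OF I j] by auto
  show "valid E0 H t Fw j u" by (fact vl(1))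
  show "valid E0 H s Fw i t" using rule_valid[OF I _ self_rstep] e by blast
  show "j < m" using vl(2) fresh_facts(2)[OF fr] by force
  show "i < m" using fresh_facts(2)[OF fr] e by blast
  show "\<not> ((m, s, u) \<in> E \<and> (m, s, u) \<in> R - {(i, s, t)} \<union> {(m, s, u)})" using fresh_notin[OF fr] by blast
  show "\<And>x s' t'. (x, s', t') \<in> E \<Longrightarrow> x \<noteq> m \<Longrightarrow> i \<noteq> x \<and> j \<noteq> x"
    using idx_ne_ER[OF I vl(2)] idx_ne_ER[OF I, of i] e by force
qed auto

lemma collapse_inv:
  assumes I: "cinv E0 E R H" and fr: "\<forall>x \<in> used_idxs (E, R, H). x < m" and fr0: "\<forall>x \<in> fst ` E0. x < m"
    and e: "(i, s, t) \<in> R" and j0: "rstep_idx (R - {(i, s, t)}) j s u"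
  shows "cinv E0 (E \<union> {(m, u, t)}) (R - {(i, s, t)}) (H \<union> {HE m u Bw j s Fw i t})"
proof (rule add_inv[OF I fr fr0])
  have j: "rstep_idx R j s u" using rstep_idx_mono[OF j0] by blast
  have vl: "valid E0 H u Bw j s" "j \<in> fst ` R" using rstep_idx_valid[OF I j] by auto
  show "valid E0 H u Bw j s" by (fact vl(1))
  show "valid E0 H s Fw i t" using rule_valid[OF I _ self_rstep] e by blast
  show "j < m" using vl(2) fresh_facts(2)[OF fr] by force
  show "i < m" using fresh_facts(2)[OF fr] e by blast
  show "\<not> ((m, u, t) \<in> E \<union> {(m, u, t)} \<and> (m, u, t) \<in> R - {(i, s, t)})" using fresh_notin[OF fr] by blast
  show "\<And>x s' t'. (x, s', t') \<in> E \<union> {(m, u, t)} \<Longrightarrow> x \<noteq> m \<Longrightarrow> j \<noteq> x \<and> i \<noteq> x"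
    using idx_ne_ER[OF I vl(2)] idx_ne_ER[OF I, of i] e by force
qed auto

lemma delete_inv:
  assumes I: "cinv E0 E R H" and e: "(i, s, s) \<in> E" and h: "HE i s o1 j v o2 k s \<in> H"
  shows "cinv E0 (E - {(i, s, s)}) R (H - {HE i s o1 j v o2 k s})"
    (is "cinv E0 ?E R ?H")
proof -
  note D = cinvD[OF I]
  have iR: "i \<notin> fst ` R" using D(2) e by force
  show ?thesis
  proof (rule cinvI)
    show "inj_on fst (?E \<union> R)" using D(1) by (rule inj_on_subset) auto
    show "fst ` ?E \<inter> fst ` R = {}" using D(2) by auto
  next
    fix x l r assume a: "(x, l, r) \<in> ?E \<union> R" "x \<in> fst ` E0"
    then show "(x, l, r) \<in> E0 \<or> (x, r, l) \<in> E0" using D(3)[of x l r] by blast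
  next
    fix x l r assume a: "(x, l, r) \<in> ?E \<union> R" "x \<notin> fst ` E0"
    then have m: "(x, l, r) \<in> E \<union> R - {(i, s, s)}" using iR by force
    have "x \<noteq> i" using idx_ne_rm[OF I _ m] e by blast
    obtain o1 j u o2 k where "HE x l o1 j u o2 k r \<in> H" using D(4)[OF DiffD1[OF m] a(2)] by blast
    with \<open>x \<noteq> i\<close> show "\<exists>o1 j u o2 k. HE x l o1 j u o2 k r \<in> ?H" by blast
  next
    fix y l p1 j1 u1 p2 k1 r assume a: "HE y l p1 j1 u1 p2 k1 r \<in> ?H" "y \<notin> fst ` E0"
    then have hH: "HE y l p1 j1 u1 p2 k1 r \<in> H" by auto
    have old: "valid E0 H l p1 j1 u1" "valid E0 H u1 p2 k1 r" "j1 < y" "k1 < y" using D(5)[OF hH a(2)] by auto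
    have "j1 \<noteq> i \<and> k1 \<noteq> i"
    proof (cases "y = i")
      case True then show ?thesis using old by auto
    next
      case False then show ?thesis using D(6)[OF e hH] by auto
    qed
    then show "valid E0 ?H l p1 j1 u1 \<and> valid E0 ?H u1 p2 k1 r \<and> j1 < y \<and> k1 < y"
      using old valid_remove by blast
  next
    fix x s' t' y l p1 j1 u1 p2 k1 r
    assume a: "(x, s', t') \<in> ?E" "HE y l p1 j1 u1 p2 k1 r \<in> ?H" "y \<noteq> x"
    then show "j1 \<noteq> x \<and> k1 \<noteq> x" using D(6)[of x s' t' y l p1 j1 u1 p2 k1 r] by auto
  qed
qed

lemma cstep_inv:
  assumes "cstep gt m (E, R, H) (E', R', H')" "cinv E0 E R H"
    "\<forall>x \<in> used_idxs (E, R, H). x < m" "\<forall>x \<in> fst ` E0. x < m"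
  shows "cinv E0 E' R' H'"
  using assms(1)
proof (cases rule: cstep.cases)
  case deduce then show ?thesis using deduce_inv[OF assms(2-4)] by blast
next
  case orient_left then show ?thesis using orient_left_inv[OF assms(2)] by blast
next
  case orient_right then show ?thesis using orient_right_inv[OF assms(2)] by blast
next
  case simplify_left then show ?thesis using simplify_left_inv[OF assms(2-4)] by blast
next
  case simplify_right then show ?thesis using simplify_right_inv[OF assms(2-4)] by blast
next
  case delete then show ?thesis using delete_inv[OF assms(2)] by blast
next
  case compose then show ?thesis using compose_inv[OF assms(2-4)] by blast
next
  case collapse then show ?thesis using collapse_inv[OF assms(2-4)] by blast
qed

lemma init_inv:
  assumes "init_eqs E E0"
  shows "cinv E0 E0 {} (init_hist E0)"
proof -
  have inj: "inj_on fst E0" and z: "0 \<notin> fst ` E0" using assms unfolding init_eqs_def by auto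
  show ?thesis
  proof (rule cinvI)
    show "inj_on fst (E0 \<union> {})" using inj by simp
  next
    fix i l o1 j u o2 k r assume "HE i l o1 j u o2 k r \<in> init_hist E0" "i \<notin> fst ` E0"
    then show "valid E0 (init_hist E0) l o1 j u \<and> valid E0 (init_hist E0) u o2 k r \<and> j < i \<and> k < i"
      unfolding init_hist_def by force
  next
    fix i s t x l o1 j u o2 k r
    assume a: "(i, s, t) \<in> E0" "HE x l o1 j u o2 k r \<in> init_hist E0" "x \<noteq> i"
    then show "j \<noteq> i \<and> k \<noteq> i" using z unfolding init_hist_def by force
  qed (auto simp: image_iff)
qed

lemma run_inv:
  assumes "init_eqs E E0" "run gt E0 ss" "n < length ss"
  shows "cinv E0 (fst (ss ! n)) (fst (snd (ss ! n))) (snd (snd (ss ! n)))"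
  using assms(3)
proof (induction n)
  case 0 then show ?case using assms(2) init_inv[OF assms(1)] unfolding run_def by auto
next
  case (Suc n)
  then have n: "n < length ss - 1" by auto
  obtain m where m: "\<forall>l \<le> n. \<forall>x \<in> used_idxs (ss ! l). x < m" "cstep gt m (ss ! n) (ss ! Suc n)"
    using assms(2) n unfolding run_def by blast
  obtain E R H where sn: "ss ! n = (E, R, H)" by (cases "ss ! n") auto
  obtain E' R' H' where sn': "ss ! Suc n = (E', R', H')" by (cases "ss ! Suc n") auto
  have fr: "\<forall>x \<in> used_idxs (E, R, H). x < m" using m(1)[rule_format, of n] sn by simp
  have "\<forall>x \<in> used_idxs (ss ! 0). x < m" using m(1) by auto
  then have fr0: "\<forall>x \<in> fst ` E0. x < m" using assms(2) unfolding run_def by auto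
  have "cinv E0 E R H" using Suc sn by auto
  from cstep_inv[OF m(2)[unfolded sn sn'] this fr fr0] show ?case using sn' by simp
qed

lemma conv_last_append: "conv_last s (xs @ ys) = conv_last (conv_last s xs) ys"
  by (induction s xs rule: conv_last.induct) auto

lemma conv_steps_append: "conv_steps s (xs @ ys) = conv_steps s xs @ conv_steps (conv_last s xs) ys"
  by (induction s xs rule: conv_steps.induct) auto

lemma conv_steps_split: "st \<in> set (conv_steps s xs) \<Longrightarrow>
   \<exists>pre d i b post. xs = pre @ (d, i, b) # post \<and> st = (conv_last s pre, d, i, b)"
proof (induction s xs rule: conv_steps.induct)
  case (1 s) then show ?case by simp
next
  case (2 s d i t xs)
  then consider "st = (s, d, i, t)" | "st \<in> set (conv_steps t xs)" by auto
  then show ?case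
  proof cases
    case 1 then show ?thesis by (intro exI[of _ "[]"]) auto
  next
    case 2
    then obtain pre d' i' b post where "xs = pre @ (d', i', b) # post" "st = (conv_last t pre, d', i', b)"
      using "2.IH" by blast
    then show ?thesis by (intro exI[of _ "(d, i, t) # pre"]) auto
  qed
qed

definition CV :: "('f, 'v) ieq set \<Rightarrow> ('f, 'v) hentry set \<Rightarrow> ('f, 'v) conv \<Rightarrow> bool" where
  "CV E0 H c \<longleftrightarrow> (\<forall>(a, d, i, b) \<in> set (conv_steps (fst c) (snd c)). valid E0 H a d i b)"

definition meas :: "('f, 'v) conv \<Rightarrow> nat" where
  "meas c = sum_list (map (\<lambda>x. 3 ^ fst (snd x)) (snd c))"

lemma three_pow: "j < i \<Longrightarrow> k < i \<Longrightarrow> (3::nat) ^ j + 3 ^ k < 3 ^ i"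
proof -
  assume "j < i" "k < i"
  then have "(3::nat) ^ j \<le> 3 ^ (i - 1)" "(3::nat) ^ k \<le> 3 ^ (i - 1)" by (auto intro: power_increasing)
  moreover have "(3::nat) ^ i = 3 * 3 ^ (i - 1)" using \<open>j < i\<close> by (cases i) auto
  moreover have "(0::nat) < 3 ^ (i - 1)" by simp
  ultimately show ?thesis by linarith
qed

lemma recall_pres:
  assumes I: "cinv E0 En R Hn" and st: "recall_step (fst ` E0) Hn c c'"
  shows "fst c' = fst c \<and> conv_end c' = conv_end c \<and> (CV E0 Hn c \<longrightarrow> CV E0 Hn c') \<and> meas c' < meas c"
proof -
  obtain pre d i t2 post l o1 j u o2 k r p \<sigma> where
    f: "fst c' = fst c" and sc: "snd c = pre @ (d, i, t2) # post" and iI: "i \<notin> fst ` E0"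
    and h: "HE i l o1 j u o2 k r \<in> Hn"
    and cs: "(d = Fw \<and> is_pos (conv_last (fst c) pre) p \<and> subt_at (conv_last (fst c) pre) p = subst l \<sigma> \<and>
             t2 = replace_at (conv_last (fst c) pre) p (subst r \<sigma>) \<and>
             snd c' = pre @ (o1, j, replace_at (conv_last (fst c) pre) p (subst u \<sigma>)) # (o2, k, t2) # post)
        \<or> (d = Bw \<and> is_pos t2 p \<and> subt_at t2 p = subst l \<sigma> \<and>
             conv_last (fst c) pre = replace_at t2 p (subst r \<sigma>) \<and>
             snd c' = pre @ (inv_dir o2, k, replace_at t2 p (subst u \<sigma>)) # (inv_dir o1, j, t2) # post)"
    using st unfolding recall_step_def Let_def by blast
  define t1 where "t1 = conv_last (fst c) pre"
  have old: "valid E0 Hn l o1 j u" "valid E0 Hn u o2 k r" "j < i" "k < i" using cinvD(5)[OF I h iI] by auto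
  have ms: "meas c' < meas c" using cs three_pow[OF old(3,4)] unfolding meas_def sc by auto
  from cs consider
    (F) "is_pos t1 p" "subt_at t1 p = subst l \<sigma>" "t2 = replace_at t1 p (subst r \<sigma>)"
        "snd c' = pre @ (o1, j, replace_at t1 p (subst u \<sigma>)) # (o2, k, t2) # post"
  | (B) "is_pos t2 p" "subt_at t2 p = subst l \<sigma>" "t1 = replace_at t2 p (subst r \<sigma>)"
        "snd c' = pre @ (inv_dir o2, k, replace_at t2 p (subst u \<sigma>)) # (inv_dir o1, j, t2) # post"
    unfolding t1_def by blast
  then have main: "conv_end c' = conv_end c \<and> (CV E0 Hn c \<longrightarrow> CV E0 Hn c')"
  proof cases
    case F
    have t1: "replace_at t1 p (subst l \<sigma>) = t1" using replace_id[OF F(1)] F(2) by simp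
    have v1: "valid E0 Hn t1 o1 j (replace_at t1 p (subst u \<sigma>))"
      using valid_ctxt[OF old(1) F(1), of \<sigma>] t1 by simp
    have v2: "valid E0 Hn (replace_at t1 p (subst u \<sigma>)) o2 k t2"
      using valid_ctxt[OF old(2) F(1), of \<sigma>] F(3) by simp
    show ?thesis using v1 v2 f F(4) sc unfolding CV_def conv_end_def
      by (simp add: conv_steps_append conv_last_append t1_def[symmetric])
  next
    case B
    have t2: "replace_at t2 p (subst l \<sigma>) = t2" using replace_id[OF B(1)] B(2) by simp
    have "valid E0 Hn t2 o1 j (replace_at t2 p (subst u \<sigma>))"
      using valid_ctxt[OF old(1) B(1), of \<sigma>] t2 by simp
    then have v2: "valid E0 Hn (replace_at t2 p (subst u \<sigma>)) (inv_dir o1) j t2" using valid_sym by metis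
    have "valid E0 Hn (replace_at t2 p (subst u \<sigma>)) o2 k t1"
      using valid_ctxt[OF old(2) B(1), of \<sigma>] B(3) by simp
    then have v1: "valid E0 Hn t1 (inv_dir o2) k (replace_at t2 p (subst u \<sigma>))" using valid_sym by metis
    show ?thesis using v1 v2 f B(4) sc unfolding CV_def conv_end_def
      by (simp add: conv_steps_append conv_last_append t1_def[symmetric])
  qed
  show ?thesis using f ms main by blast
qed

lemma join_CV:
  assumes I: "cinv E0 En R Hn" and j: "is_join R s t c0"
  shows "CV E0 Hn c0"
  unfolding CV_def
proof (intro ballI, clarify)
  fix a d i b assume "(a, d, i, b) \<in> set (conv_steps (fst c0) (snd c0))"
  then have "R_step R (a, d, i, b)" using j unfolding is_join_def by blast
  then show "valid E0 Hn a d i b" using rstep_idx_valid[OF I] by auto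
qed

lemma nf_E_step:
  assumes I: "cinv E0 En R Hn" and cv: "CV E0 Hn c" and nf: "\<not> (\<exists>c'. recall_step (fst ` E0) Hn c c')"
    and st: "st \<in> set (conv_steps (fst c) (snd c))"
  shows "E_step E0 st"
proof -
  obtain pre d i b post where sc: "snd c = pre @ (d, i, b) # post" and ste: "st = (conv_last (fst c) pre, d, i, b)"
    using conv_steps_split[OF st] by blast
  define a where "a = conv_last (fst c) pre"
  have v: "valid E0 Hn a d i b" using cv st ste unfolding CV_def a_def by auto
  show ?thesis
  proof (cases "i \<in> fst ` E0 \<or> (i = 0 \<and> d = Eq \<and> a = b)")
    case True then show ?thesis using v ste unfolding valid_def a_def by auto
  next
    case False
    then obtain l o1 j u o2 k r where h: "HE i l o1 j u o2 k r \<in> Hn" and iI: "i \<notin> fst ` E0"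
      and dr: "(d = Fw \<and> rstep (l, r) a b) \<or> (d = Bw \<and> rstep (l, r) b a)"
      using v unfolding valid_def by blast
    from dr have "\<exists>c'. recall_step (fst ` E0) Hn c c'"
    proof
      assume F: "d = Fw \<and> rstep (l, r) a b"
      then obtain p \<sigma> where ps: "is_pos a p" "subt_at a p = subst l \<sigma>" "b = replace_at a p (subst r \<sigma>)"
        unfolding rstep_def by auto
      let ?c' = "(fst c, pre @ (o1, j, replace_at a p (subst u \<sigma>)) # (o2, k, b) # post)"
      have "recall_step (fst ` E0) Hn c ?c'"
        unfolding recall_step_def Let_def
        apply (rule conjI, simp)
        apply (rule exI[of _ pre], rule exI[of _ d], rule exI[of _ i], rule exI[of _ b], rule exI[of _ post])
        apply (rule exI[of _ l], rule exI[of _ o1], rule exI[of _ j], rule exI[of _ u], rule exI[of _ o2])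
        apply (rule exI[of _ k], rule exI[of _ r], rule exI[of _ p], rule exI[of _ \<sigma>])
        using sc iI h F ps unfolding a_def by auto
      then show ?thesis by blast
    next
      assume B: "d = Bw \<and> rstep (l, r) b a"
      then obtain p \<sigma> where ps: "is_pos b p" "subt_at b p = subst l \<sigma>" "a = replace_at b p (subst r \<sigma>)"
        unfolding rstep_def by auto
      let ?c' = "(fst c, pre @ (inv_dir o2, k, replace_at b p (subst u \<sigma>)) # (inv_dir o1, j, b) # post)"
      have "recall_step (fst ` E0) Hn c ?c'"
        unfolding recall_step_def Let_def
        apply (rule conjI, simp)
        apply (rule exI[of _ pre], rule exI[of _ d], rule exI[of _ i], rule exI[of _ b], rule exI[of _ post])
        apply (rule exI[of _ l], rule exI[of _ o1], rule exI[of _ j], rule exI[of _ u], rule exI[of _ o2])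
        apply (rule exI[of _ k], rule exI[of _ r], rule exI[of _ p], rule exI[of _ \<sigma>])
        using sc iI h B ps unfolding a_def by auto
      then show ?thesis by blast
    qed
    then show ?thesis using nf by blast
  qed
qed

lemma no_desc: "\<forall>n. g (Suc n) < (g n :: nat) \<Longrightarrow> False"
proof -
  assume a: "\<forall>n. g (Suc n) < g n"
  have "g n + n \<le> g 0" for n
  proof (induction n)
    case (Suc n) then show ?case using a[rule_format, of n] by simp
  qed simp
  from this[of "Suc (g 0)"] show False by simp
qed

theorem lemma2:
  fixes gt :: "('f, 'v) trm \<Rightarrow> ('f, 'v) trm \<Rightarrow> bool"
    and E :: "(('f, 'v) trm \<times> ('f, 'v) trm) set"
    and E0 En R :: "('f, 'v) ieq set"
    and Hn :: "('f, 'v) hentry set"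
    and ss :: "('f, 'v) state list"
    and s t :: "('f, 'v) trm"
    and c0 :: "('f, 'v) conv"
  assumes "infinite (UNIV :: 'v set)"
    and "reduction_order gt"
    and "init_eqs E E0"
    and "run gt E0 ss"
    and "last ss = (En, R, Hn)"
    and "is_join R s t c0"
  shows "\<not> (\<exists>f. f 0 = c0 \<and> (\<forall>n. recall_step (fst ` E0) Hn (f n) (f (Suc n)))) \<and>
         (\<forall>c. (recall_step (fst ` E0) Hn)\<^sup>*\<^sup>* c0 c \<and> \<not> (\<exists>c'. recall_step (fst ` E0) Hn c c') \<longrightarrow>
           fst c = s \<and> conv_end c = t \<and>
           (\<forall>st \<in> set (conv_steps (fst c) (snd c)). E_step E0 st))"
proof -
  have ne: "ss \<noteq> []" using assms(4) unfolding run_def by blast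
  have "ss ! (length ss - 1) = (En, R, Hn)" using ne assms(5) by (simp add: last_conv_nth)
  moreover have "length ss - 1 < length ss" using ne by simp
  ultimately have I: "cinv E0 En R Hn" using run_inv[OF assms(3,4), of "length ss - 1"] by simp
  have part1: "\<not> (\<exists>f. f 0 = c0 \<and> (\<forall>n. recall_step (fst ` E0) Hn (f n) (f (Suc n))))"
  proof
    assume "\<exists>f. f 0 = c0 \<and> (\<forall>n. recall_step (fst ` E0) Hn (f n) (f (Suc n)))"
    then obtain f where "\<forall>n. recall_step (fst ` E0) Hn (f n) (f (Suc n))" by blast
    then have "\<forall>n. meas (f (Suc n)) < meas (f n)" using recall_pres[OF I] by blast
    then show False by (rule no_desc)
  qed
  have inv: "fst c = s \<and> conv_end c = t \<and> CV E0 Hn c" if "(recall_step (fst ` E0) Hn)\<^sup>*\<^sup>* c0 c" for c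
    using that
  proof (induction rule: rtranclp_induct)
    case base then show ?case using assms(6) join_CV[OF I assms(6)] unfolding is_join_def by blast
  next
    case (step y z) then show ?case using recall_pres[OF I step(2)] by auto
  qed
  show ?thesis using part1 inv nf_E_step[OF I] by blast
qed

end
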